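(* Let $N,M_d\ge 1$, $\varepsilon\ge0$, and $\tilde{\mathbf H}_{rd}=[\tilde{\mathbf h}_1,\dots,\tilde{\mathbf h}_N]\in\mathbb C^{M_d\times N}$. Fix any $\mathbf r\in\mathbb C^{M_d}$ with $\|\mathbf r\|_2=1$, set $\alpha_i=|\tilde{\mathbf h}_i^H\mathbf r|$ and $\chi(N)=\sum_{i=1}^N\alpha_i^2$, and let $\Omega(k^\circ)$ denote the optimal value of $$\max_{\mathbf w\in\mathbb C^N}\ |\mathbf r^H\tilde{\mathbf H}_{rd}\mathbf w|-\varepsilon\|\mathbf w\|_2\quad\text{s.t. } |w_i|\le1,\ i=1,\dots,N$$ (equivalently of $\max\ \sum_{i=1}^N|w_i|\alpha_i-\varepsilon\sqrt{\sum_{i=1}^N|w_i|^2}$ over $|w_i|\le 1$). Then $\Omega(k^\circ)>0$ if and only if $\varepsilon<\sqrt{\chi(N)}$; moreover $\sqrt{\chi(N)}\leq \sqrt{\lambda_{\max}(\tilde {\mathbf H}_{rd}\tilde {\mathbf H}_{rd}^H)}$.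
   Context: $\lambda_{\max}(\cdot)$ denotes the largest eigenvalue of a Hermitian matrix; $\tilde{\mathbf h}_i$ is the $i$-th column of $\tilde{\mathbf H}_{rd}$; $w_i$ the $i$-th entry of $\mathbf w$; $(\cdot)^H$ conjugate transpose; $\|\cdot\|_2$ Euclidean norm. *)

theory Defs
  imports "Jordan_Normal_Form.Schur_Decomposition"
begin

(* Largest eigenvalue of a (Hermitian) complex matrix: the maximum of its real eigenvalues.
   For Hermitian matrices all eigenvalues are real. *)
definition lambda_max :: "complex mat \<Rightarrow> real" where
  "lambda_max A = Max {x::real. eigenvalue A (complex_of_real x)}"

definition vnorm2 :: "complex vec \<Rightarrow> real" where
  "vnorm2 v = sqrt (\<Sum>i<dim_vec v. (cmod (v $ i))\<^sup>2)"

definition feasible :: "nat \<Rightarrow> complex vec set" where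
  "feasible N = {w \<in> carrier_vec N. \<forall>i<N. cmod (w $ i) \<le> 1}"

definition objective :: "complex mat \<Rightarrow> complex vec \<Rightarrow> real \<Rightarrow> complex vec \<Rightarrow> real" where
  "objective H r eps w = cmod (conjugate r \<bullet> (H *\<^sub>v w)) - eps * vnorm2 w"

definition Omega :: "complex mat \<Rightarrow> complex vec \<Rightarrow> real \<Rightarrow> real" where
  "Omega H r eps = (SUP w \<in> feasible (dim_col H). objective H r eps w)"

definition alpha :: "complex mat \<Rightarrow> complex vec \<Rightarrow> nat \<Rightarrow> real" where
  "alpha H r i = cmod (conjugate (col H i) \<bullet> r)"

definition chi :: "complex mat \<Rightarrow> complex vec \<Rightarrow> real" where
  "chi H r = (\<Sum>i<dim_col H. (alpha H r i)\<^sup>2)"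

end

theory Submission imports Defs "HOL-Analysis.L2_Norm" "Jordan_Normal_Form.Spectral_Radius" begin

lemma adj_dims[simp]: fixes M :: "complex mat"
  shows "dim_row (mat_adjoint M) = dim_col M" "dim_col (mat_adjoint M) = dim_row M"
  unfolding mat_adjoint_def by auto

lemma adj_index[simp]: fixes M :: "complex mat"
  shows "i < dim_col M \<Longrightarrow> j < dim_row M \<Longrightarrow> mat_adjoint M $$ (i,j) = cnj (M $$ (j,i))"
  unfolding mat_adjoint_def by (auto simp: mat_of_rows_def)

lemma adj_carrier: fixes M :: "complex mat"
  shows "M \<in> carrier_mat m n \<Longrightarrow> mat_adjoint M \<in> carrier_mat n m"
  unfolding carrier_mat_def by simp

lemma sp_conj: fixes x :: "complex vec"
  assumes "x \<in> carrier_vec n" "y \<in> carrier_vec n"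
  shows "conjugate x \<bullet> y = (\<Sum>i<n. cnj (x$i) * y$i)"
proof -
  have "dim_vec y = n" "dim_vec x = n" using assms by auto
  then show ?thesis unfolding scalar_prod_def lessThan_atLeast0 by simp
qed

lemma mv_index: fixes M :: "complex mat"
  assumes "M \<in> carrier_mat m n" "y \<in> carrier_vec n" "i < m"
  shows "(M *\<^sub>v y) $ i = (\<Sum>j<n. M $$ (i,j) * y$j)"
proof -
  have "dim_vec y = n" "dim_row M = m" "dim_col M = n" using assms by auto
  then show ?thesis using assms(3) by (simp add: scalar_prod_def lessThan_atLeast0)
qed

lemma adj_move:
  fixes M :: "complex mat" assumes M: "M \<in> carrier_mat m n" and x: "x \<in> carrier_vec m" and y: "y \<in> carrier_vec n"
  shows "conjugate x \<bullet> (M *\<^sub>v y) = conjugate (mat_adjoint M *\<^sub>v x) \<bullet> y"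
proof -
  have a: "mat_adjoint M \<in> carrier_mat n m" using M by (rule adj_carrier)
  have Mx: "mat_adjoint M *\<^sub>v x \<in> carrier_vec n" using a x by simp
  have My: "M *\<^sub>v y \<in> carrier_vec m" using M y by simp
  have "conjugate x \<bullet> (M *\<^sub>v y) = (\<Sum>i<m. cnj (x$i) * (\<Sum>j<n. M $$ (i,j) * y$j))"
    using M x y My by (simp add: sp_conj mv_index[OF M y] del: index_mult_mat_vec)
  also have "\<dots> = (\<Sum>i<m. \<Sum>j<n. cnj (x$i) * M $$ (i,j) * y$j)"
    by (simp add: sum_distrib_left mult.assoc)
  also have "\<dots> = (\<Sum>j<n. \<Sum>i<m. cnj (x$i) * M $$ (i,j) * y$j)"
    by (rule sum.swap)
  also have "\<dots> = (\<Sum>j<n. cnj (\<Sum>i<m. mat_adjoint M $$ (j,i) * x$i) * y$j)"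
    using M by (auto simp: sum_distrib_right sum_distrib_left mult.commute mult.left_commute intro!: sum.cong)
  also have "\<dots> = conjugate (mat_adjoint M *\<^sub>v x) \<bullet> y"
    using a x y Mx by (subst sp_conj[OF Mx y], simp add: mv_index[OF a x] del: index_mult_mat_vec)
  finally show ?thesis .
qed

lemma cs_c: fixes a b :: "nat \<Rightarrow> complex"
  shows "cmod (\<Sum>i<n. a i * b i) \<le> sqrt (\<Sum>i<n. (cmod (a i))\<^sup>2) * sqrt (\<Sum>i<n. (cmod (b i))\<^sup>2)"
proof -
  have "cmod (\<Sum>i<n. a i * b i) \<le> (\<Sum>i<n. cmod (a i * b i))" by (rule norm_sum)
  also have "\<dots> = (\<Sum>i<n. \<bar>cmod (a i)\<bar> * \<bar>cmod (b i)\<bar>)" by (simp add: norm_mult)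
  also have "\<dots> \<le> L2_set (\<lambda>i. cmod (a i)) {..<n} * L2_set (\<lambda>i. cmod (b i)) {..<n}"
    by (rule L2_set_mult_ineq)
  finally show ?thesis unfolding L2_set_def .
qed

lemma cnj_mult_self: "cnj z * z = complex_of_real ((cmod z)\<^sup>2)"
  using complex_norm_square[of z] by (simp add: mult.commute)

lemma sp_self: fixes x :: "complex vec"
  assumes "x \<in> carrier_vec n"
  shows "conjugate x \<bullet> x = complex_of_real (\<Sum>i<n. (cmod (x$i))\<^sup>2)"
  using assms by (simp add: sp_conj cnj_mult_self)

lemma adj_adj: fixes M :: "complex mat" shows "mat_adjoint (mat_adjoint M) = M"
  by (rule eq_matI, auto)

lemma gram_herm:
  fixes G :: "complex mat" assumes G: "G \<in> carrier_mat m n"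
    and x: "x \<in> carrier_vec m" and y: "y \<in> carrier_vec m"
  shows "conjugate x \<bullet> ((G * mat_adjoint G) *\<^sub>v y) = conjugate ((G * mat_adjoint G) *\<^sub>v x) \<bullet> y"
proof -
  have a: "mat_adjoint G \<in> carrier_mat n m" using G by (rule adj_carrier)
  have "conjugate x \<bullet> ((G * mat_adjoint G) *\<^sub>v y) = conjugate x \<bullet> (G *\<^sub>v (mat_adjoint G *\<^sub>v y))"
    using G a y by simp
  also have "\<dots> = conjugate (mat_adjoint G *\<^sub>v x) \<bullet> (mat_adjoint G *\<^sub>v y)"
    using G a x y by (intro adj_move) auto
  also have "\<dots> = conjugate (mat_adjoint (mat_adjoint G) *\<^sub>v (mat_adjoint G *\<^sub>v x)) \<bullet> y"
    using G a x y by (intro adj_move) auto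
  also have "\<dots> = conjugate ((G * mat_adjoint G) *\<^sub>v x) \<bullet> y"
    using G a x by (simp add: adj_adj)
  finally show ?thesis .
qed

lemma pow_comm: fixes A :: "'a::semiring_1 mat" assumes A: "A \<in> carrier_mat n n"
  shows "A ^\<^sub>m k * A = A * A ^\<^sub>m k"
proof (induction k)
  case 0 then show ?case using A by simp
next
  case (Suc k)
  have "A ^\<^sub>m Suc k * A = (A ^\<^sub>m k * A) * A" by simp
  also have "\<dots> = (A * A ^\<^sub>m k) * A" using Suc by simp
  also have "\<dots> = A * (A ^\<^sub>m k * A)" using A by (intro assoc_mult_mat) auto
  finally show ?case by simp
qed

lemma pow_add: fixes A :: "'a::semiring_1 mat" assumes A: "A \<in> carrier_mat n n"
  shows "A ^\<^sub>m (a + b) = A ^\<^sub>m a * A ^\<^sub>m b"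
proof (induction b)
  case 0 then show ?case using A by simp
next
  case (Suc b)
  have "A ^\<^sub>m (a + Suc b) = A ^\<^sub>m (a + b) * A" by simp
  also have "\<dots> = (A ^\<^sub>m a * A ^\<^sub>m b) * A" using Suc by simp
  also have "\<dots> = A ^\<^sub>m a * (A ^\<^sub>m b * A)" using A by (intro assoc_mult_mat) auto
  finally show ?case by simp
qed

lemma herm_pow:
  fixes A :: "complex mat" assumes A: "A \<in> carrier_mat m m"
    and h: "\<And>x y. x \<in> carrier_vec m \<Longrightarrow> y \<in> carrier_vec m \<Longrightarrow>
        conjugate x \<bullet> (A *\<^sub>v y) = conjugate (A *\<^sub>v x) \<bullet> y"
  shows "x \<in> carrier_vec m \<Longrightarrow> y \<in> carrier_vec m \<Longrightarrow>
        conjugate x \<bullet> ((A ^\<^sub>m k) *\<^sub>v y) = conjugate ((A ^\<^sub>m k) *\<^sub>v x) \<bullet> y"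
proof (induction k arbitrary: x y)
  case 0 then show ?case using A by simp
next
  case (Suc k)
  have P: "A ^\<^sub>m k \<in> carrier_mat m m" using A by simp
  have "conjugate x \<bullet> ((A ^\<^sub>m Suc k) *\<^sub>v y) = conjugate x \<bullet> ((A ^\<^sub>m k) *\<^sub>v (A *\<^sub>v y))"
    using A P Suc.prems by (simp add: assoc_mult_mat_vec[OF P A])
  also have "\<dots> = conjugate ((A ^\<^sub>m k) *\<^sub>v x) \<bullet> (A *\<^sub>v y)"
    using Suc A by simp
  also have "\<dots> = conjugate (A *\<^sub>v ((A ^\<^sub>m k) *\<^sub>v x)) \<bullet> y"
    using h Suc.prems P by simp
  also have "A *\<^sub>v ((A ^\<^sub>m k) *\<^sub>v x) = (A * A ^\<^sub>m k) *\<^sub>v x"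
    using A P Suc.prems by (simp add: assoc_mult_mat_vec[OF A P])
  also have "A * A ^\<^sub>m k = A ^\<^sub>m Suc k" using pow_comm[OF A, of k] by simp
  finally show ?case .
qed

lemma Q_square:
  fixes A :: "complex mat" assumes A: "A \<in> carrier_mat m m"
    and h: "\<And>x y. x \<in> carrier_vec m \<Longrightarrow> y \<in> carrier_vec m \<Longrightarrow>
        conjugate x \<bullet> (A *\<^sub>v y) = conjugate (A *\<^sub>v x) \<bullet> y"
    and r: "r \<in> carrier_vec m" and r1: "(\<Sum>i<m. (cmod (r$i))\<^sup>2) = 1"
  shows "(cmod (conjugate r \<bullet> ((A ^\<^sub>m k) *\<^sub>v r)))\<^sup>2 \<le> cmod (conjugate r \<bullet> ((A ^\<^sub>m (k+k)) *\<^sub>v r))"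
proof -
  define P where "P = A ^\<^sub>m k"
  have P: "P \<in> carrier_mat m m" using A unfolding P_def by simp
  define v where "v = P *\<^sub>v r"
  have v: "v \<in> carrier_vec m" using P r unfolding v_def by simp
  have "conjugate r \<bullet> ((A ^\<^sub>m (k+k)) *\<^sub>v r) = conjugate r \<bullet> (P *\<^sub>v v)"
    unfolding pow_add[OF A] P_def v_def using A r by (simp add: assoc_mult_mat_vec[OF P P, unfolded P_def])
  also have "\<dots> = conjugate v \<bullet> v"
    unfolding v_def P_def using herm_pow[OF A h r, of "A ^\<^sub>m k *\<^sub>v r" k] v unfolding v_def P_def by simp
  also have "\<dots> = complex_of_real (\<Sum>i<m. (cmod (v$i))\<^sup>2)" using v by (rule sp_self)
  finally have e0: "conjugate r \<bullet> ((A ^\<^sub>m (k+k)) *\<^sub>v r) = complex_of_real (\<Sum>i<m. (cmod (v$i))\<^sup>2)" .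
  have S0: "(\<Sum>i<m. (cmod (v$i))\<^sup>2) \<ge> 0" by (simp add: sum_nonneg)
  have e1: "cmod (conjugate r \<bullet> ((A ^\<^sub>m (k+k)) *\<^sub>v r)) = (\<Sum>i<m. (cmod (v$i))\<^sup>2)"
    unfolding e0 norm_of_real using S0 by (rule abs_of_nonneg)
  have "cmod (conjugate r \<bullet> ((A ^\<^sub>m k) *\<^sub>v r)) = cmod (\<Sum>i<m. cnj (r$i) * v$i)"
    using sp_conj[OF r v] unfolding v_def P_def by simp
  also have "\<dots> \<le> sqrt (\<Sum>i<m. (cmod (cnj (r$i)))\<^sup>2) * sqrt (\<Sum>i<m. (cmod (v$i))\<^sup>2)"
    by (rule cs_c)
  also have "\<dots> = sqrt (\<Sum>i<m. (cmod (v$i))\<^sup>2)" using r1 by simp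
  finally have "(cmod (conjugate r \<bullet> ((A ^\<^sub>m k) *\<^sub>v r)))\<^sup>2 \<le> (sqrt (\<Sum>i<m. (cmod (v$i))\<^sup>2))\<^sup>2"
    by (intro power_mono) auto
  also have "\<dots> = (\<Sum>i<m. (cmod (v$i))\<^sup>2)" by (simp add: sum_nonneg)
  finally show ?thesis using e1 by simp
qed

lemma Q_pow2:
  fixes A :: "complex mat" assumes A: "A \<in> carrier_mat m m"
    and h: "\<And>x y. x \<in> carrier_vec m \<Longrightarrow> y \<in> carrier_vec m \<Longrightarrow>
        conjugate x \<bullet> (A *\<^sub>v y) = conjugate (A *\<^sub>v x) \<bullet> y"
    and r: "r \<in> carrier_vec m" and r1: "(\<Sum>i<m. (cmod (r$i))\<^sup>2) = 1"
  shows "(cmod (conjugate r \<bullet> ((A ^\<^sub>m 1) *\<^sub>v r))) ^ (2^j) \<le> cmod (conjugate r \<bullet> ((A ^\<^sub>m (2^j)) *\<^sub>v r))"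
proof (induction j)
  case 0 then show ?case by simp
next
  case (Suc j)
  let ?q = "cmod (conjugate r \<bullet> ((A ^\<^sub>m 1) *\<^sub>v r))"
  have "?q ^ (2 ^ Suc j) = (?q ^ (2^j))\<^sup>2" by (simp add: power_mult[symmetric] mult.commute)
  also have "\<dots> \<le> (cmod (conjugate r \<bullet> ((A ^\<^sub>m (2^j)) *\<^sub>v r)))\<^sup>2"
    using Suc by (intro power_mono) auto
  also have "\<dots> \<le> cmod (conjugate r \<bullet> ((A ^\<^sub>m (2^j + 2^j)) *\<^sub>v r))"
    by (rule Q_square[OF A h r r1])
  finally show ?case by (simp add: mult_2)
qed

lemma Q_bound:
  fixes P :: "complex mat" assumes P: "P \<in> carrier_mat m m" and nb: "norm_bound P b"
    and r: "r \<in> carrier_vec m" and r1: "\<And>i. i < m \<Longrightarrow> cmod (r$i) \<le> 1"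
  shows "cmod (conjugate r \<bullet> (P *\<^sub>v r)) \<le> real m * real m * b"
proof -
  have Pr: "P *\<^sub>v r \<in> carrier_vec m" using P r by simp
  have "conjugate r \<bullet> (P *\<^sub>v r) = (\<Sum>i<m. cnj (r$i) * (\<Sum>j<m. P $$ (i,j) * r$j))"
    using P r Pr by (simp add: sp_conj mv_index[OF P r] del: index_mult_mat_vec)
  also have "\<dots> = (\<Sum>i<m. \<Sum>j<m. cnj (r$i) * P $$ (i,j) * r$j)"
    by (simp add: sum_distrib_left mult.assoc)
  finally have "cmod (conjugate r \<bullet> (P *\<^sub>v r)) \<le> (\<Sum>i<m. cmod (\<Sum>j<m. cnj (r$i) * P $$ (i,j) * r$j))"
    using norm_sum by simp
  also have "\<dots> \<le> (\<Sum>i<m. \<Sum>j<m. cmod (cnj (r$i) * P $$ (i,j) * r$j))"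
    by (intro sum_mono norm_sum)
  also have "\<dots> \<le> (\<Sum>i<m. \<Sum>j<m. b)"
  proof (intro sum_mono)
    fix i j assume i: "i \<in> {..<m}" and j: "j \<in> {..<m}"
    have b: "cmod (P $$ (i,j)) \<le> b" using nb P i j unfolding norm_bound_def by auto
    have "cmod (cnj (r$i) * P $$ (i,j) * r$j) = cmod (r$i) * cmod (P $$ (i,j)) * cmod (r$j)"
      by (simp add: norm_mult)
    also have "\<dots> \<le> 1 * b * 1"
      using r1 i j b order_trans[OF norm_ge_zero b] by (intro mult_mono) auto
    finally show "cmod (cnj (r$i) * P $$ (i,j) * r$j) \<le> b" by simp
  qed
  also have "\<dots> = real m * real m * b" by simp
  finally show ?thesis .
qed

lemma eig_real:
  fixes G :: "complex mat" assumes G: "G \<in> carrier_mat m n"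
    and ev: "eigenvalue (G * mat_adjoint G) e"
  shows "\<exists>x\<ge>0. e = complex_of_real x"
proof -
  have a: "mat_adjoint G \<in> carrier_mat n m" using G by (rule adj_carrier)
  have A: "G * mat_adjoint G \<in> carrier_mat m m" using G a by simp
  from ev obtain v where "eigenvector (G * mat_adjoint G) v e" unfolding eigenvalue_def by auto
  then have v: "v \<in> carrier_vec m" and v0: "v \<noteq> 0\<^sub>v m" and Av: "(G * mat_adjoint G) *\<^sub>v v = e \<cdot>\<^sub>v v"
    unfolding eigenvector_def using A by auto
  define u where "u = mat_adjoint G *\<^sub>v v"
  have u: "u \<in> carrier_vec n" using a v unfolding u_def by simp
  have "conjugate v \<bullet> ((G * mat_adjoint G) *\<^sub>v v) = conjugate v \<bullet> (G *\<^sub>v u)"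
    using G a v unfolding u_def by simp
  also have "\<dots> = conjugate u \<bullet> u" using adj_move[OF G v u] unfolding u_def by simp
  also have "\<dots> = complex_of_real (\<Sum>i<n. (cmod (u$i))\<^sup>2)" using u by (rule sp_self)
  finally have e1: "conjugate v \<bullet> ((G * mat_adjoint G) *\<^sub>v v) = complex_of_real (\<Sum>i<n. (cmod (u$i))\<^sup>2)" .
  have "conjugate v \<bullet> ((G * mat_adjoint G) *\<^sub>v v) = e * (conjugate v \<bullet> v)"
    unfolding Av using v by simp
  also have "conjugate v \<bullet> v = complex_of_real (\<Sum>i<m. (cmod (v$i))\<^sup>2)" using v by (rule sp_self)
  finally have e2: "complex_of_real (\<Sum>i<n. (cmod (u$i))\<^sup>2) = e * complex_of_real (\<Sum>i<m. (cmod (v$i))\<^sup>2)"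
    using e1 by simp
  have pos: "(\<Sum>i<m. (cmod (v$i))\<^sup>2) > 0"
  proof (rule ccontr)
    assume "\<not> ?thesis"
    moreover have "(\<Sum>i<m. (cmod (v$i))\<^sup>2) \<ge> 0" by (simp add: sum_nonneg)
    ultimately have "(\<Sum>i<m. (cmod (v$i))\<^sup>2) = 0" by linarith
    then have "\<forall>i\<in>{..<m}. (cmod (v$i))\<^sup>2 = 0" by (subst (asm) sum_nonneg_eq_0_iff) auto
    then have "v = 0\<^sub>v m" using v by (intro eq_vecI) auto
    with v0 show False by simp
  qed
  define su where "su = (\<Sum>i<n. (cmod (u$i))\<^sup>2)"
  define sv where "sv = (\<Sum>i<m. (cmod (v$i))\<^sup>2)"
  have e3: "complex_of_real su = e * complex_of_real sv" using e2 unfolding su_def sv_def .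
  have sv: "sv > 0" using pos unfolding sv_def .
  define x where "x = su / sv"
  have "e = complex_of_real x" unfolding x_def using e3 sv
    by (simp add: field_simps)
  moreover have "x \<ge> 0" unfolding x_def su_def sv_def by (intro divide_nonneg_nonneg sum_nonneg) auto
  ultimately show ?thesis by blast
qed

lemma smult_mv: fixes M :: "complex mat"
  assumes M: "M \<in> carrier_mat m n" and v: "v \<in> carrier_vec n"
  shows "(a \<cdot>\<^sub>m M) *\<^sub>v v = a \<cdot>\<^sub>v (M *\<^sub>v v)"
proof (rule eq_vecI)
  show "dim_vec ((a \<cdot>\<^sub>m M) *\<^sub>v v) = dim_vec (a \<cdot>\<^sub>v (M *\<^sub>v v))" by simp
  fix i assume "i < dim_vec (a \<cdot>\<^sub>v (M *\<^sub>v v))"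
  then have i: "i < m" using M by simp
  have aM: "a \<cdot>\<^sub>m M \<in> carrier_mat m n" using M by simp
  show "((a \<cdot>\<^sub>m M) *\<^sub>v v) $ i = (a \<cdot>\<^sub>v (M *\<^sub>v v)) $ i"
    using i M v by (simp add: mv_index[OF aM v i] mv_index[OF M v i] sum_distrib_left mult.assoc
       del: index_mult_mat_vec)
qed

lemma scaled_gram: fixes H :: "complex mat"
  assumes H: "H \<in> carrier_mat m n"
  shows "(complex_of_real s \<cdot>\<^sub>m H) * mat_adjoint (complex_of_real s \<cdot>\<^sub>m H)
     = complex_of_real (s*s) \<cdot>\<^sub>m (H * mat_adjoint H)"
  using H by (intro eq_matI) (auto simp: scalar_prod_def sum_distrib_left mult.commute mult.left_commute intro!: sum.cong)

lemma gram_le_lambda_max: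
  fixes H :: "complex mat"
  assumes H: "H \<in> carrier_mat m n" and m: "m \<ge> 1"
    and r: "r \<in> carrier_vec m" and r1: "(\<Sum>i<m. (cmod (r$i))\<^sup>2) = 1"
  shows "cmod (conjugate r \<bullet> ((H * mat_adjoint H) *\<^sub>v r)) \<le> lambda_max (H * mat_adjoint H)"
proof -
  define A where "A = H * mat_adjoint H"
  have a: "mat_adjoint H \<in> carrier_mat n m" using H by (rule adj_carrier)
  have A: "A \<in> carrier_mat m m" unfolding A_def using H a by simp
  define S where "S = {x::real. eigenvalue A (complex_of_real x)}"
  have ev_real: "\<And>e. eigenvalue A e \<Longrightarrow> \<exists>x\<ge>0. e = complex_of_real x"
    using eig_real[OF H] unfolding A_def by blast
  have "complex_of_real ` S \<subseteq> spectrum A" unfolding S_def spectrum_def by auto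
  then have "finite (complex_of_real ` S)" using card_finite_spectrum(1)[OF A] by (rule finite_subset)
  then have finS: "finite S" by (rule finite_imageD) (simp add: inj_on_def)
  from spectrum_non_empty[OF A] m obtain e0 where "e0 \<in> spectrum A" by fastforce
  then have "eigenvalue A e0" unfolding spectrum_def by simp
  with ev_real obtain x0 where x0: "x0 \<ge> 0" "e0 = complex_of_real x0" by blast
  have x0S: "x0 \<in> S" unfolding S_def using \<open>eigenvalue A e0\<close> x0 by simp
  define L where "L = lambda_max A"
  have L: "L = Max S" unfolding L_def lambda_max_def S_def ..
  have LS: "\<And>x. x \<in> S \<Longrightarrow> x \<le> L" unfolding L using finS by simp
  have L0: "L \<ge> 0" using LS[OF x0S] x0 by simp
  define q where "q = cmod (conjugate r \<bullet> (A *\<^sub>v r))"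
  show ?thesis unfolding A_def[symmetric] L_def[symmetric] q_def[symmetric]
  proof (rule ccontr)
    assume "\<not> q \<le> L"
    then have qL: "q > L" by simp
    define t where "t = (q + L) / 2"
    have t0: "t > 0" and tL: "L < t" and tq: "t < q" using qL L0 unfolding t_def by auto
    define G where "G = complex_of_real (1 / sqrt t) \<cdot>\<^sub>m H"
    have G: "G \<in> carrier_mat m n" unfolding G_def using H by simp
    define B where "B = G * mat_adjoint G"
    have B_eq: "B = complex_of_real (1/t) \<cdot>\<^sub>m A"
      unfolding B_def G_def A_def scaled_gram[OF H] using t0
      by (simp add: real_sqrt_mult[symmetric])
    have B: "B \<in> carrier_mat m m" unfolding B_eq using A by simp
    have Bv: "\<And>v. v \<in> carrier_vec m \<Longrightarrow> B *\<^sub>v v = complex_of_real (1/t) \<cdot>\<^sub>v (A *\<^sub>v v)"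
      unfolding B_eq using A by (rule smult_mv)
    have evB: "eigenvalue A (complex_of_real t * e)" if "eigenvalue B e" for e
    proof -
      from that obtain v where "eigenvector B v e" unfolding eigenvalue_def by auto
      then have v: "v \<in> carrier_vec m" and v0: "v \<noteq> 0\<^sub>v m" and Bve: "B *\<^sub>v v = e \<cdot>\<^sub>v v"
        unfolding eigenvector_def using B by auto
      have "A *\<^sub>v v = complex_of_real t \<cdot>\<^sub>v (B *\<^sub>v v)"
        unfolding Bv[OF v] using t0 by (simp add: smult_smult_assoc)
      also have "\<dots> = (complex_of_real t * e) \<cdot>\<^sub>v v" unfolding Bve by (simp add: smult_smult_assoc)
      finally have "eigenvector A v (complex_of_real t * e)"
        unfolding eigenvector_def using A v v0 by simp
      then show ?thesis unfolding eigenvalue_def by blast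
    qed
    have srB: "spectral_radius B < 1"
    proof -
      from spectral_radius_mem_max(1)[OF B] m obtain e where
        e: "e \<in> spectrum B" and sre: "spectral_radius B = norm e" by auto
      have "eigenvalue A (complex_of_real t * e)" using e evB unfolding spectrum_def by simp
      with ev_real obtain x where x: "x \<ge> 0" "complex_of_real t * e = complex_of_real x" by blast
      have xS: "x \<in> S" unfolding S_def using \<open>eigenvalue A (complex_of_real t * e)\<close> x by simp
      have ex: "e = complex_of_real (x / t)" using x(2) t0 by (simp add: field_simps)
      have "norm e = x / t" unfolding ex norm_of_real using x t0 by simp
      also have "\<dots> < 1" using LS[OF xS] tL t0 by simp
      finally show ?thesis using sre by simp
    qed
    from spectral_radius_jnf_norm_bound_less_1_upper_triangular[OF B srB]
    obtain c where c: "\<And>k. norm_bound (B ^\<^sub>m k) c" by auto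
    have hB: "\<And>x y. x \<in> carrier_vec m \<Longrightarrow> y \<in> carrier_vec m \<Longrightarrow>
        conjugate x \<bullet> (B *\<^sub>v y) = conjugate (B *\<^sub>v x) \<bullet> y"
      unfolding B_def by (rule gram_herm[OF G])
    have ri: "\<And>i. i < m \<Longrightarrow> cmod (r$i) \<le> 1"
    proof -
      fix i assume i: "i < m"
      have "(cmod (r$i))\<^sup>2 \<le> (\<Sum>i<m. (cmod (r$i))\<^sup>2)"
        using i by (intro member_le_sum) auto
      then have "(cmod (r$i))\<^sup>2 \<le> 1\<^sup>2" using r1 by simp
      then show "cmod (r$i) \<le> 1" by (rule power2_le_imp_le) simp
    qed
    have q1: "cmod (conjugate r \<bullet> ((B ^\<^sub>m 1) *\<^sub>v r)) = q / t"
    proof -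
      have "(B ^\<^sub>m 1) *\<^sub>v r = B *\<^sub>v r" using B by simp
      also have "\<dots> = complex_of_real (1/t) \<cdot>\<^sub>v (A *\<^sub>v r)" using Bv[OF r] .
      finally have "conjugate r \<bullet> ((B ^\<^sub>m 1) *\<^sub>v r) = complex_of_real (1/t) * (conjugate r \<bullet> (A *\<^sub>v r))"
        using A r by simp
      then show ?thesis unfolding q_def using t0 by (simp add: norm_divide)
    qed
    have bnd: "(q/t) ^ (2^j) \<le> real m * real m * c" for j
    proof -
      have "(q/t) ^ (2^j) \<le> cmod (conjugate r \<bullet> ((B ^\<^sub>m (2^j)) *\<^sub>v r))"
        using Q_pow2[OF B hB r r1, of j] unfolding q1 .
      also have "\<dots> \<le> real m * real m * c"
        using B by (intro Q_bound[OF _ c r ri]) simp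
      finally show ?thesis .
    qed
    have "q / t > 1" using tq t0 by simp
    from real_arch_pow[OF this] obtain k where k: "real m * real m * c < (q/t)^k" by blast
    have "(q/t)^k \<le> (q/t)^(2^k)"
      using \<open>q / t > 1\<close> by (intro power_increasing) (auto intro: less_imp_le less_exp)
    with k bnd[of k] show False by simp
  qed
qed

theorem proposition1:
  fixes H :: "complex mat" and r :: "complex vec" and N Md :: nat and eps :: real
  assumes "N \<ge> 1" and "Md \<ge> 1" and "eps \<ge> 0"
    and "H \<in> carrier_mat Md N"
    and "r \<in> carrier_vec Md" and "vnorm2 r = 1"
  shows "(Omega H r eps > 0 \<longleftrightarrow> eps < sqrt (chi H r))
         \<and> sqrt (chi H r) \<le> sqrt (lambda_max (H * mat_adjoint H))"
proof -
  note H = assms(4) and r = assms(5)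
  have eps0: "eps \<ge> 0" using assms(3) .
  have dH: "dim_row H = Md" "dim_col H = N" using H by auto
  have dr: "dim_vec r = Md" using r by auto
  have r1: "(\<Sum>i<Md. (cmod (r$i))\<^sup>2) = 1" using assms(6) unfolding vnorm2_def dr by simp
  have a: "mat_adjoint H \<in> carrier_mat N Md" using H by (rule adj_carrier)
  define c where "c i = (\<Sum>j<Md. cnj (r$j) * H $$ (j,i))" for i
  define u where "u = mat_adjoint H *\<^sub>v r"
  have u: "u \<in> carrier_vec N" unfolding u_def using a r by simp
  have ui: "u $ i = cnj (c i)" if i: "i < N" for i
  proof -
    have "u $ i = (\<Sum>j<Md. mat_adjoint H $$ (i,j) * r$j)"
      unfolding u_def by (rule mv_index[OF a r i])
    also have "\<dots> = cnj (c i)" unfolding c_def using i dH by (simp add: mult.commute)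
    finally show ?thesis .
  qed
  have alpha_eq: "alpha H r i = cmod (c i)" if i: "i < N" for i
  proof -
    have ci: "col H i \<in> carrier_vec Md" using col_dim[of H i] dH by simp
    have "conjugate (col H i) \<bullet> r = (\<Sum>j<Md. cnj (col H i $ j) * r$j)" by (rule sp_conj[OF ci r])
    also have "\<dots> = cnj (c i)" unfolding c_def using i dH by (simp add: mult.commute)
    finally show ?thesis unfolding alpha_def by simp
  qed
  define X where "X = (\<Sum>i<N. (cmod (c i))\<^sup>2)"
  have chiX: "chi H r = X" unfolding chi_def X_def dH using alpha_eq by simp
  have X0: "X \<ge> 0" unfolding X_def by (simp add: sum_nonneg)
  have obj_eq: "conjugate r \<bullet> (H *\<^sub>v w) = (\<Sum>i<N. c i * w$i)" if w: "w \<in> carrier_vec N" for w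
  proof -
    have "conjugate r \<bullet> (H *\<^sub>v w) = conjugate u \<bullet> w" unfolding u_def by (rule adj_move[OF H r w])
    also have "\<dots> = (\<Sum>i<N. cnj (u$i) * w$i)" by (rule sp_conj[OF u w])
    also have "\<dots> = (\<Sum>i<N. c i * w$i)" using ui by simp
    finally show ?thesis .
  qed
  have vn: "vnorm2 w = sqrt (\<Sum>i<N. (cmod (w$i))\<^sup>2)" if w: "w \<in> carrier_vec N" for w
    using w unfolding vnorm2_def by simp
  have obj_le: "objective H r eps w \<le> (sqrt X - eps) * vnorm2 w" if w: "w \<in> carrier_vec N" for w
  proof -
    have "cmod (conjugate r \<bullet> (H *\<^sub>v w)) \<le> sqrt X * vnorm2 w"
      unfolding obj_eq[OF w] vn[OF w] X_def by (rule cs_c)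
    then show ?thesis unfolding objective_def by (simp add: algebra_simps)
  qed
  have vn_le: "vnorm2 w \<le> sqrt N" if w: "w \<in> feasible N" for w
  proof -
    have wc: "w \<in> carrier_vec N" and wi: "\<And>i. i < N \<Longrightarrow> cmod (w$i) \<le> 1"
      using w unfolding feasible_def by auto
    have "(\<Sum>i<N. (cmod (w$i))\<^sup>2) \<le> (\<Sum>i<N. 1)"
      using wi by (intro sum_mono) (simp add: power_le_one)
    then show ?thesis unfolding vn[OF wc] by simp
  qed
  have obj_bdd: "objective H r eps w \<le> sqrt X * sqrt N" if w: "w \<in> feasible N" for w
  proof -
    have wc: "w \<in> carrier_vec N" using w unfolding feasible_def by auto
    have v0: "vnorm2 w \<ge> 0" unfolding vnorm2_def by (simp add: sum_nonneg)
    have "objective H r eps w \<le> (sqrt X - eps) * vnorm2 w" by (rule obj_le[OF wc])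
    also have "\<dots> \<le> sqrt X * vnorm2 w" using eps0 v0 by (simp add: algebra_simps)
    also have "\<dots> \<le> sqrt X * sqrt N" using vn_le[OF w] X0 by (intro mult_left_mono) auto
    finally show ?thesis .
  qed
  have bdd: "bdd_above (objective H r eps ` feasible N)"
    using obj_bdd by (intro bdd_aboveI2) auto
  have ne: "feasible N \<noteq> {}"
  proof -
    have "0\<^sub>v N \<in> feasible N" unfolding feasible_def by simp
    then show ?thesis by blast
  qed
  have Om: "Omega H r eps = (SUP w \<in> feasible N. objective H r eps w)"
    unfolding Omega_def dH ..
  have part1: "Omega H r eps > 0 \<longleftrightarrow> eps < sqrt X"
  proof
    assume pos: "Omega H r eps > 0"
    show "eps < sqrt X"
    proof (rule ccontr)
      assume "\<not> eps < sqrt X"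
      then have le: "sqrt X - eps \<le> 0" by simp
      have "Omega H r eps \<le> 0" unfolding Om
      proof (rule cSUP_least[OF ne])
        fix w assume w: "w \<in> feasible N"
        have wc: "w \<in> carrier_vec N" using w unfolding feasible_def by auto
        have v0: "vnorm2 w \<ge> 0" unfolding vnorm2_def by (simp add: sum_nonneg)
        have "objective H r eps w \<le> (sqrt X - eps) * vnorm2 w" by (rule obj_le[OF wc])
        also have "\<dots> \<le> 0" using le v0 by (simp add: mult_nonpos_nonneg)
        finally show "objective H r eps w \<le> 0" .
      qed
      with pos show False by simp
    qed
  next
    assume lt: "eps < sqrt X"
    then have Xp: "X > 0" using eps0 X0 by (cases "X = 0") auto
    have sX: "sqrt X > 0" using Xp by simp
    define w where "w = vec N (\<lambda>i. cnj (c i) / complex_of_real (sqrt X))"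
    have wc: "w \<in> carrier_vec N" unfolding w_def by simp
    have wi: "cmod (w$i) = cmod (c i) / sqrt X" if i: "i < N" for i
      unfolding w_def using i sX by (simp add: norm_divide)
    have ci: "cmod (c i) \<le> sqrt X" if i: "i < N" for i
    proof -
      have "(cmod (c i))\<^sup>2 \<le> X" unfolding X_def using i by (intro member_le_sum) auto
      then show ?thesis by (rule real_le_rsqrt)
    qed
    have wf: "w \<in> feasible N" unfolding feasible_def using wc wi ci sX by simp
    have s1: "(\<Sum>i<N. c i * w$i) = complex_of_real (X / sqrt X)"
    proof -
      have "(\<Sum>i<N. c i * w$i) = (\<Sum>i<N. complex_of_real ((cmod (c i))\<^sup>2 / sqrt X))"
      proof (intro sum.cong refl)
        fix i assume "i \<in> {..<N}"
        then have "c i * w$i = (cnj (c i) * c i) / complex_of_real (sqrt X)"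
          unfolding w_def by (simp add: mult.commute)
        also have "\<dots> = complex_of_real ((cmod (c i))\<^sup>2 / sqrt X)"
          unfolding cnj_mult_self by simp
        finally show "c i * w$i = complex_of_real ((cmod (c i))\<^sup>2 / sqrt X)" .
      qed
      also have "\<dots> = complex_of_real (X / sqrt X)" unfolding X_def
        by (simp add: sum_divide_distrib)
      finally show ?thesis .
    qed
    have "X / sqrt X = sqrt X" using Xp by (simp add: real_div_sqrt)
    have n1: "cmod (conjugate r \<bullet> (H *\<^sub>v w)) = sqrt X"
      unfolding obj_eq[OF wc] s1 norm_of_real using \<open>X / sqrt X = sqrt X\<close> X0 by simp
    have n2: "vnorm2 w = 1"
    proof -
      have "(\<Sum>i<N. (cmod (w$i))\<^sup>2) = (\<Sum>i<N. (cmod (c i))\<^sup>2 / X)"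
        using wi sX by (intro sum.cong) (auto simp: power_divide)
      also have "\<dots> = 1" unfolding sum_divide_distrib[symmetric] X_def[symmetric] using Xp by simp
      finally show ?thesis unfolding vn[OF wc] by simp
    qed
    have ow: "objective H r eps w = sqrt X - eps" unfolding objective_def n1 n2 by simp
    have "objective H r eps w \<le> Omega H r eps" unfolding Om by (rule cSUP_upper[OF wf bdd])
    then show "Omega H r eps > 0" using ow lt by simp
  qed
  have "cmod (conjugate r \<bullet> ((H * mat_adjoint H) *\<^sub>v r)) \<le> lambda_max (H * mat_adjoint H)"
    by (rule gram_le_lambda_max[OF H assms(2) r r1])
  moreover have "conjugate r \<bullet> ((H * mat_adjoint H) *\<^sub>v r) = complex_of_real X"
  proof -
    have "conjugate r \<bullet> ((H * mat_adjoint H) *\<^sub>v r) = conjugate r \<bullet> (H *\<^sub>v u)"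
      unfolding u_def using H a r by simp
    also have "\<dots> = conjugate u \<bullet> u" unfolding u_def by (rule adj_move[OF H r u[unfolded u_def]])
    also have "\<dots> = complex_of_real (\<Sum>i<N. (cmod (u$i))\<^sup>2)" by (rule sp_self[OF u])
    also have "\<dots> = complex_of_real X" unfolding X_def using ui by simp
    finally show ?thesis .
  qed
  ultimately have "X \<le> lambda_max (H * mat_adjoint H)" using X0 by simp
  then have "sqrt X \<le> sqrt (lambda_max (H * mat_adjoint H))" by (rule real_sqrt_le_mono)
  with part1 show ?thesis unfolding chiX by simp
qed

end
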